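(* Let $P=[\alpha^1,\dots,\alpha^d,I]$ be a tile and let $q\in\mathcal{Q}_{d-1}$ with $q(x_I^j)\in\alpha^j$ for all $j\in\{1,\dots,d\}$. Then $$\|q-q_P\|_{L^\infty(\tilde I)}\le c(d)\,|I|^{-1},$$ where $c(d)$ depends only on $d$.
   Context: Fix $d\in\mathbb{N}$. $\mathcal{Q}_{d-1}$ is the class of real polynomials of degree $\le d-1$. A tile is a $(d+1)$-tuple $P=[\alpha^1,\dots,\alpha^d,I]$ of dyadic half-open intervals, $I$ a dyadic subinterval of $[0,1]$ and $\alpha^j$ dyadic intervals of $\mathbb{R}$, with $|\alpha^j|=|I|^{-1}$. For dyadic $I$, the points $x_I^1,\dots,x_I^d$ are: $x_I^1,x_I^2$ the endpoints of $I$, $x_I^3=\frac{x_I^1+x_I^2}{2}$, $x_I^4=\frac{x_I^1+x_I^3}{2}$, $x_I^5=\frac{x_I^3+x_I^2}{2}$, and so on inductively (successive dyadic midpoints, generation by generation, left to right) until $d$ distinct points are obtained. The central polynomial $q_P\in\mathcal{Q}_{d-1}$ is the Lagrange interpolation polynomial with $q_P(x_I^j)=c(\alpha^j)$ (the center of $\alpha^j$) for all $j$, i.e. $q_P(y)=\sum_{j=1}^d\frac{\prod_{k\ne j}(y-x_I^k)}{\prod_{k\ne j}(x_I^j-x_I^k)}c(\alpha^j)$. $\tilde I=13I$ is the interval with the same center as $I$ and length $13|I|$. *)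

theory Defs
  imports "HOL-Analysis.Analysis" "HOL-Computational_Algebra.Polynomial"
begin

definition dyad :: "int \<Rightarrow> int \<Rightarrow> real set" where
  "dyad k m = {of_int m * 2 powr of_int k ..< (of_int m + 1) * 2 powr of_int k}"

definition dyad_center :: "int \<Rightarrow> int \<Rightarrow> real" where
  "dyad_center k m = (of_int m + 1/2) * 2 powr of_int k"

text \<open>Normalized dyadic points on [0,1]: t_1 = 0, t_2 = 1, t_3 = 1/2, t_4 = 1/4, t_5 = 3/4,
  t_6 = 1/8, ... (successive dyadic midpoints, generation by generation, left to right).\<close>
definition dyad_pt :: "nat \<Rightarrow> real" where
  "dyad_pt j = (if j \<le> 1 then 0 else if j = 2 then 1 else
     (let g = nat \<lfloor>log 2 (real (j - 2))\<rfloor>; r = (j - 2) - 2 ^ g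
      in (2 * real r + 1) / 2 ^ (g + 1)))"

text \<open>The points x_I^j for the dyadic interval I = [m 2^(-k), (m+1) 2^(-k)).\<close>
definition xI :: "nat \<Rightarrow> int \<Rightarrow> nat \<Rightarrow> real" where
  "xI k m j = (of_int m + dyad_pt j) / 2 ^ k"

text \<open>Central polynomial of the tile [alpha^1..alpha^d, I], I = dyad (-k) m,
  alpha^j = dyad k (n j): Lagrange interpolant with values c(alpha^j) at x_I^j.\<close>
definition central_poly :: "nat \<Rightarrow> nat \<Rightarrow> int \<Rightarrow> (nat \<Rightarrow> int) \<Rightarrow> real \<Rightarrow> real" where
  "central_poly d k m n y =
     (\<Sum>j\<in>{1..d}. (\<Prod>i\<in>{1..d}-{j}. (y - xI k m i)) / (\<Prod>i\<in>{1..d}-{j}. (xI k m j - xI k m i))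
                   * dyad_center (int k) (n j))"

end

theory Submission
  imports Defs
begin


lemma dyad_pt_form:
  assumes "j \<ge> 3"
  shows "\<exists>g r. j - 2 = 2^g + r \<and> dyad_pt j = (2 * real r + 1) / 2 ^ (g + 1)"
proof -
  define g where "g = nat \<lfloor>log 2 (real (j - 2))\<rfloor>"
  have pos: "j - 2 > 0" using assms by simp
  have "log 2 (real (j-2)) \<ge> 0" using pos by simp
  hence "\<lfloor>log 2 (real (j - 2))\<rfloor> = int g" unfolding g_def by simp
  hence "\<lfloor>log (real (2::nat)) (real (j - 2))\<rfloor> = int g" by simp
  hence "2^g \<le> j - 2" using floor_log_nat_eq_powr_iff[of 2 "j-2" g] pos by simp
  moreover have "dyad_pt j = (2 * real ((j - 2) - 2 ^ g) + 1) / 2 ^ (g + 1)"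
    using assms unfolding dyad_pt_def g_def Let_def by simp
  ultimately show ?thesis by (intro exI[of _ g] exI[of _ "(j - 2) - 2 ^ g"]) auto
qed


lemma odd_pow_eq:
  fixes r r' g g' :: nat
  assumes "(2*r+1) * 2^(g'+1) = (2*r'+1) * 2^(g+1)" "g \<le> g'"
  shows "g = g' \<and> r = r'"
proof (cases "g = g'")
  case True thus ?thesis using assms by simp
next
  case False
  then obtain e where e: "g' = g + Suc e" using assms(2) using less_imp_Suc_add by fastforce
  have "2^(g'+1) = (2::nat)^(Suc e) * 2^(g+1)"
    unfolding e by (simp add: power_add)
  hence "((2*r+1) * 2^(Suc e)) * 2^(g+1) = (2*r'+1) * 2^(g+1)"
    using assms(1) by (metis mult.assoc)
  hence "(2*r+1) * 2^(Suc e) = 2*r'+1" using mult_right_cancel[of "(2::nat)^(g+1)"] by (metis power_not_zero zero_neq_numeral)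
  hence "even (2*r'+1)" by (metis dvd_mult dvd_triv_left power_Suc)
  thus ?thesis by simp
qed
lemma dyad_pt_inj: "inj_on dyad_pt {1..}"
proof (rule inj_onI)
  fix a b :: nat assume a: "a \<in> {1..}" and b: "b \<in> {1..}" and eq: "dyad_pt a = dyad_pt b"
  have ne: "dyad_pt j \<noteq> 0 \<and> dyad_pt j \<noteq> 1" if j3: "j \<ge> 3" for j
  proof -
    obtain g r where gr: "dyad_pt j = (2 * real r + 1) / 2 ^ (g + 1)" using dyad_pt_form[OF j3] by blast
    have "(2 * real r + 1) \<noteq> 2 ^ (g+1)"
    proof
      assume "(2 * real r + 1) = 2 ^ (g+1)"
      hence "real (2*r+1) = real (2^(g+1))" by simp
      hence "2*r+1 = 2^(g+1)" by (simp only: of_nat_eq_iff)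
      thus False by (metis dvd_triv_left even_add odd_one power_Suc Suc_eq_plus1)
    qed
    moreover have "2 * real r + 1 > 0" by simp
    moreover have "(2::real) ^ (g+1) > 0" by simp
    ultimately show ?thesis using gr by (simp add: divide_eq_1_iff)
  qed
  show "a = b"
  proof (cases "a \<ge> 3 \<and> b \<ge> 3")
    case True
    obtain g r where gr: "a - 2 = 2^g + r" "dyad_pt a = (2 * real r + 1) / 2 ^ (g + 1)" using dyad_pt_form True by blast
    obtain g' r' where gr': "b - 2 = 2^g' + r'" "dyad_pt b = (2 * real r' + 1) / 2 ^ (g' + 1)" using dyad_pt_form True by blast
    have "(2 * real r + 1) * 2^(g'+1) = (2 * real r' + 1) * 2^(g+1)"
      using eq gr gr' by (simp add: field_simps)
    hence "real ((2*r+1) * 2^(g'+1)) = real ((2*r'+1) * 2^(g+1))" by (simp add: algebra_simps)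
    hence E: "(2*r+1) * 2^(g'+1) = (2*r'+1) * 2^(g+1)" by (simp only: of_nat_eq_iff)
    have "g = g' \<and> r = r'"
    proof (cases "g \<le> g'")
      case True thus ?thesis using odd_pow_eq E by blast
    next
      case False thus ?thesis using odd_pow_eq[of r' g r g'] E by simp
    qed
    hence "a - 2 = b - 2" using gr(1) gr'(1) by simp
    thus ?thesis using True by linarith
  next
    case False
    have d1: "dyad_pt 1 = 0" "dyad_pt 2 = 1" by (simp_all add: dyad_pt_def)
    have sm: "(j = 1 \<and> dyad_pt j = 0) \<or> (j = 2 \<and> dyad_pt j = 1)" if "j \<ge> 1" "\<not> j \<ge> 3" for j
    proof -
      have "j = 1 \<or> j = 2" using that by linarith
      thus ?thesis using d1 by blast
    qed
    show ?thesis
    proof (cases "a \<ge> 3")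
      case True
      hence "\<not> b \<ge> 3" using False by blast
      thus ?thesis using sm[of b] b ne[OF True] eq by auto
    next
      case F2: False
      show ?thesis
      proof (cases "b \<ge> 3")
        case True
        thus ?thesis using sm[of a] a ne[OF True] eq F2 by auto
      next
        case False
        thus ?thesis using sm[of a] sm[of b] a b eq F2 by auto
      qed
    qed
  qed
qed



lemma lagrange:
  fixes x :: "nat \<Rightarrow> real" and q :: "real poly"
  assumes inj: "inj_on x D" and fin: "finite D" and deg: "degree q < card D"
  shows "poly q y = (\<Sum>j\<in>D. (\<Prod>i\<in>D-{j}. (y - x i)) / (\<Prod>i\<in>D-{j}. (x j - x i)) * poly q (x j))"
proof -
  define p where "p = (\<Sum>j\<in>D. smult (poly q (x j) / (\<Prod>i\<in>D-{j}. (x j - x i))) (\<Prod>i\<in>D-{j}. [:- x i, 1:]))"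
  have pp: "poly p z = (\<Sum>j\<in>D. (\<Prod>i\<in>D-{j}. (z - x i)) / (\<Prod>i\<in>D-{j}. (x j - x i)) * poly q (x j))" for z
    unfolding p_def by (simp add: poly_sum poly_prod mult.commute)
  have degp: "degree p \<le> card D - 1"
    unfolding p_def
  proof (rule degree_sum_le[OF fin])
    fix j assume j: "j \<in> D"
    have "degree (\<Prod>i\<in>D-{j}. [:- x i, 1:]) \<le> (\<Sum>i\<in>D-{j}. degree [:- x i, 1:])"
      using degree_prod_sum_le[of "D-{j}" "\<lambda>i. [:- x i, 1:]"] fin by (simp add: o_def)
    also have "\<dots> = card (D - {j})" by simp
    also have "\<dots> = card D - 1" using j fin by simp
    finally show "degree (smult (poly q (x j) / (\<Prod>i\<in>D-{j}. (x j - x i))) (\<Prod>i\<in>D-{j}. [:- x i, 1:])) \<le> card D - 1"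
      using degree_smult_le order_trans by blast
  qed
  have agree: "poly q z = poly p z" if z: "z \<in> x ` D" for z
  proof -
    obtain l where l: "l \<in> D" "z = x l" using z by blast
    have zero: "(\<Prod>i\<in>D-{j}. (x l - x i)) = 0" if "j \<in> D - {l}" for j
      using that l fin by (intro prod_zero) auto
    have nz: "(\<Prod>i\<in>D-{l}. (x l - x i)) \<noteq> 0"
      using fin inj l(1) by (auto simp: inj_on_def)
    have "poly p z = (\<Prod>i\<in>D-{l}. (x l - x i)) / (\<Prod>i\<in>D-{l}. (x l - x i)) * poly q (x l)
        + (\<Sum>j\<in>D-{l}. (\<Prod>i\<in>D-{j}. (x l - x i)) / (\<Prod>i\<in>D-{j}. (x j - x i)) * poly q (x j))"
      unfolding pp l(2) by (rule sum.remove[OF fin l(1)])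
    also have "\<dots> = poly q (x l)" using nz zero by simp
    finally show ?thesis using l by simp
  qed
  have "card (x ` D) = card D" using card_image[OF inj] .
  moreover have "degree p < card D" using degp deg by linarith
  ultimately have "q = p" using deg poly_eqI_degree[of "x ` D" q p] agree by metis
  hence "poly q y = poly p y" by simp
  also have "\<dots> = (\<Sum>j\<in>D. (\<Prod>i\<in>D-{j}. (y - x i)) / (\<Prod>i\<in>D-{j}. (x j - x i)) * poly q (x j))" by (rule pp)
  finally show ?thesis .
qed


lemma factor_bound:
  fixes k :: nat and m :: int and y :: real
  assumes hy: "\<bar>y - (of_int m + 1/2) / 2 ^ k\<bar> \<le> (13 / 2) / 2 ^ k"
    and ne: "dyad_pt j \<noteq> dyad_pt i"
  shows "\<bar>y - xI k m i\<bar> / \<bar>xI k m j - xI k m i\<bar> \<le> (7 + \<bar>dyad_pt i\<bar>) / \<bar>dyad_pt j - dyad_pt i\<bar>"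
proof -
  define P where "P = (2::real)^k"
  have P: "P > 0" unfolding P_def by simp
  define s where "s = y * P - of_int m"
  have ys: "y = (of_int m + s) / P" unfolding s_def using P by (simp add: field_simps)
  have eq: "y - (of_int m + 1/2) / P = (s - 1/2) / P" unfolding ys using P by (simp add: field_simps)
  have hy': "\<bar>y - (of_int m + 1/2) / P\<bar> \<le> (13 / 2) / P" using hy unfolding P_def .
  hence "\<bar>(s - 1/2) / P\<bar> \<le> (13 / 2) / P" using hy' by (simp only: eq)
  hence "\<bar>s - 1/2\<bar> / P \<le> (13 / 2) / P" by (simp only: abs_divide abs_of_pos[OF P])
  hence "\<bar>s - 1/2\<bar> \<le> 13/2" using P divide_le_cancel by blast
  hence sb: "\<bar>s - dyad_pt i\<bar> \<le> 7 + \<bar>dyad_pt i\<bar>" by linarith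
  have "y - xI k m i = ((of_int m + s) - (of_int m + dyad_pt i)) / P"
    unfolding xI_def P_def[symmetric] by (subst ys) (rule diff_divide_distrib[symmetric])
  hence "y - xI k m i = (s - dyad_pt i) / P" by simp
  hence e1: "\<bar>y - xI k m i\<bar> = \<bar>s - dyad_pt i\<bar> / P" by (simp only: abs_divide abs_of_pos[OF P])
  have "xI k m j - xI k m i = ((of_int m + dyad_pt j) - (of_int m + dyad_pt i)) / P"
    unfolding xI_def P_def[symmetric] by (rule diff_divide_distrib[symmetric])
  hence "xI k m j - xI k m i = (dyad_pt j - dyad_pt i) / P" by simp
  hence e2: "\<bar>xI k m j - xI k m i\<bar> = \<bar>dyad_pt j - dyad_pt i\<bar> / P" by (simp only: abs_divide abs_of_pos[OF P])
  have "\<bar>y - xI k m i\<bar> / \<bar>xI k m j - xI k m i\<bar> = \<bar>s - dyad_pt i\<bar> / \<bar>dyad_pt j - dyad_pt i\<bar>"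
    unfolding e1 e2 using P by simp
  also have "\<dots> \<le> (7 + \<bar>dyad_pt i\<bar>) / \<bar>dyad_pt j - dyad_pt i\<bar>"
    using sb by (simp add: divide_right_mono)
  finally show ?thesis .
qed
lemma err_bound:
  assumes "v \<in> dyad (int k) nj"
  shows "\<bar>v - dyad_center (int k) nj\<bar> \<le> 2 ^ k / 2"
proof -
  have p: "(2::real) powr real_of_int (int k) = 2 ^ k" by (simp add: powr_realpow)
  have "of_int nj * 2 ^ k \<le> v" "v < (of_int nj + 1) * 2 ^ k"
    using assms unfolding dyad_def p by auto
  moreover have "dyad_center (int k) nj = (of_int nj + 1/2) * 2 ^ k"
    unfolding dyad_center_def p ..
  ultimately have "v - dyad_center (int k) nj \<le> 2 ^ k / 2" "-(v - dyad_center (int k) nj) \<le> 2 ^ k / 2"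
    by (simp_all add: algebra_simps)
  thus ?thesis by (simp only: abs_le_iff)
qed

theorem lemmaC:
  fixes d :: nat
  assumes "d \<ge> 1"
  shows "\<exists>c::real. \<forall>(k::nat) (m::int) (n::nat \<Rightarrow> int) (q::real poly) (y::real).
           0 \<le> m \<and> m < 2 ^ k \<and>
           degree q \<le> d - 1 \<and>
           (\<forall>j\<in>{1..d}. poly q (xI k m j) \<in> dyad (int k) (n j)) \<and>
           \<bar>y - (of_int m + 1/2) / 2 ^ k\<bar> \<le> (13 / 2) / 2 ^ k
           \<longrightarrow> \<bar>poly q y - central_poly d k m n y\<bar> \<le> c * 2 ^ k"
proof -
  define D where "D = {1..d}"
  define Bj where "Bj j = (\<Prod>i\<in>D-{j}. (7 + \<bar>dyad_pt i\<bar>) / \<bar>dyad_pt j - dyad_pt i\<bar>)" for j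
  have fin: "finite D" unfolding D_def by simp
  have cardD: "card D = d" unfolding D_def by simp
  have tinj: "dyad_pt j \<noteq> dyad_pt i" if "i \<in> D" "j \<in> D" "i \<noteq> j" for i j
    using dyad_pt_inj that unfolding D_def inj_on_def by auto
  show ?thesis
  proof (rule exI[of _ "(\<Sum>j\<in>D. Bj j) / 2"], intro allI impI)
    fix k :: nat and m :: int and n :: "nat \<Rightarrow> int" and q :: "real poly" and y :: real
    assume H: "0 \<le> m \<and> m < 2 ^ k \<and> degree q \<le> d - 1 \<and>
           (\<forall>j\<in>{1..d}. poly q (xI k m j) \<in> dyad (int k) (n j)) \<and>
           \<bar>y - (of_int m + 1/2) / 2 ^ k\<bar> \<le> (13 / 2) / 2 ^ k"
    hence deg: "degree q < card D" and mem: "\<And>j. j \<in> D \<Longrightarrow> poly q (xI k m j) \<in> dyad (int k) (n j)"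
      and hy: "\<bar>y - (of_int m + 1/2) / 2 ^ k\<bar> \<le> (13 / 2) / 2 ^ k"
      using assms unfolding cardD D_def by auto
    define x where "x = xI k m"
    define L where "L j = (\<Prod>i\<in>D-{j}. (y - x i)) / (\<Prod>i\<in>D-{j}. (x j - x i))" for j
    define e where "e j = poly q (x j) - dyad_center (int k) (n j)" for j
    have injx: "inj_on x D"
    proof (rule inj_onI)
      fix i j assume ij: "i \<in> D" "j \<in> D" "x i = x j"
      hence "(of_int m + dyad_pt i) / 2 ^ k = (of_int m + dyad_pt j) / (2::real) ^ k"
        unfolding x_def xI_def by simp
      hence "dyad_pt i = dyad_pt j" by simp
      thus "i = j" using tinj ij by blast
    qed
    have lag: "poly q y = (\<Sum>j\<in>D. L j * poly q (x j))"
      unfolding L_def using lagrange[OF injx fin deg] .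
    have cen: "central_poly d k m n y = (\<Sum>j\<in>D. L j * dyad_center (int k) (n j))"
      unfolding central_poly_def L_def x_def D_def ..
    have diff: "poly q y - central_poly d k m n y = (\<Sum>j\<in>D. L j * e j)"
      unfolding lag cen e_def by (simp add: sum_subtractf[symmetric] right_diff_distrib)
    have eb: "\<bar>e j\<bar> \<le> 2 ^ k / 2" if "j \<in> D" for j
      unfolding e_def x_def using err_bound[OF mem[OF that]] .
    have Lb: "\<bar>L j\<bar> \<le> Bj j" if j: "j \<in> D" for j
    proof -
      have "\<bar>L j\<bar> = (\<Prod>i\<in>D-{j}. \<bar>y - x i\<bar>) / (\<Prod>i\<in>D-{j}. \<bar>x j - x i\<bar>)"
        unfolding L_def by (simp add: abs_prod abs_divide)
      also have "\<dots> = (\<Prod>i\<in>D-{j}. \<bar>y - x i\<bar> / \<bar>x j - x i\<bar>)"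
        by (rule prod_dividef[symmetric])
      also have "\<dots> \<le> Bj j" unfolding Bj_def
      proof (rule prod_mono)
        fix i assume i: "i \<in> D - {j}"
        show "0 \<le> \<bar>y - x i\<bar> / \<bar>x j - x i\<bar> \<and> \<bar>y - x i\<bar> / \<bar>x j - x i\<bar> \<le> (7 + \<bar>dyad_pt i\<bar>) / \<bar>dyad_pt j - dyad_pt i\<bar>"
          using factor_bound[OF hy, of j i] tinj[of i j] i j unfolding x_def by auto
      qed
      finally show ?thesis .
    qed
    have "\<bar>poly q y - central_poly d k m n y\<bar> \<le> (\<Sum>j\<in>D. \<bar>L j * e j\<bar>)"
      unfolding diff by (rule sum_abs)
    also have "\<dots> \<le> (\<Sum>j\<in>D. Bj j * (2 ^ k / 2))"
    proof (rule sum_mono)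
      fix j assume j: "j \<in> D"
      show "\<bar>L j * e j\<bar> \<le> Bj j * (2 ^ k / 2)"
        unfolding abs_mult by (rule mult_mono[OF Lb[OF j] eb[OF j]]) (use Lb[OF j] in auto)
    qed
    also have "\<dots> = (\<Sum>j\<in>D. Bj j) * (2 ^ k / 2)"
      by (rule sum_distrib_right[symmetric])
    also have "\<dots> = (\<Sum>j\<in>D. Bj j) / 2 * 2 ^ k" by simp
    finally show "\<bar>poly q y - central_poly d k m n y\<bar> \<le> (\<Sum>j\<in>D. Bj j) / 2 * 2 ^ k" .
  qed
qed
end
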